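(* If $\Gamma\rhd_{\diamond} \Delta$ then $\mathrm{var}(\Gamma')=\mathrm{var}(\Delta')$ for some $\Gamma'\subseteq \Gamma$, $\Delta'\subseteq \Delta$.
   Context: A $\Sigma$-Nmatrix $\mathbb{M}=\langle V,\cdot_{\mathbb{M}},D\rangle$ has truth-values $V$, designated values $D\subseteq V$, and interprets each $n$-ary connective as a multi-function $V^n\to\wp(V)\setminus\emptyset$. An $\mathbb{M}$-valuation is a map $v$ from formulas to $V$ with $v(\copyright(\varphi_1,\ldots,\varphi_k))\in\copyright_{\mathbb{M}}(v(\varphi_1),\ldots,v(\varphi_k))$. The (multiple-conclusion, Scottian) logic $\rhd_{\mathbb{M}}$ is defined by $\Gamma\rhd_{\mathbb{M}}\Delta$ iff every $\mathbb{M}$-valuation with $v(\Gamma)\subseteq D$ has $v(\Delta)\cap D\neq\emptyset$. Let $\Sigma_\diamond$ contain a single binary connective $\diamond$ (platypus), and let $\mathbb{B}_\diamond=\langle\{0,1\},\cdot,\{1\}\rangle$ interpret it by $\diamond(0,0)=\{0\}$, $\diamond(1,1)=\{1\}$, $\diamond(0,1)=\diamond(1,0)=\{0,1\}$ (i.e. $\diamond(x,y)=\{x\land y,x\lor y\}$). $\rhd_\diamond$ denotes $\rhd_{\mathbb{B}_\diamond}$, and $\mathrm{var}(\Gamma)$ is the set of propositional variables occurring in $\Gamma$. *)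

theory Defs
  imports Main
begin

text \<open>Formulas over the signature with a single binary connective (platypus).\<close>
datatype 'v fm = Var 'v | Dia "'v fm" "'v fm"

primrec vars :: "'v fm \<Rightarrow> 'v set" where
  "vars (Var p) = {p}"
| "vars (Dia a b) = vars a \<union> vars b"

definition varset :: "'v fm set \<Rightarrow> 'v set" where
  "varset \<Gamma> = (\<Union>\<phi>\<in>\<Gamma>. vars \<phi>)"

text \<open>The Nmatrix B_dia: values {0,1} (as bool), designated {1} (True).\<close>
definition dia_B :: "bool \<Rightarrow> bool \<Rightarrow> bool set" where
  "dia_B x y = {x \<and> y, x \<or> y}"

definition designated :: "bool set" where
  "designated = {True}"

definition is_valuation :: "('v fm \<Rightarrow> bool) \<Rightarrow> bool" where
  "is_valuation v \<longleftrightarrow> (\<forall>a b. v (Dia a b) \<in> dia_B (v a) (v b))"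

definition cons_dia :: "'v fm set \<Rightarrow> 'v fm set \<Rightarrow> bool" where
  "cons_dia \<Gamma> \<Delta> \<longleftrightarrow>
     (\<forall>v. is_valuation v \<longrightarrow> v ` \<Gamma> \<subseteq> designated \<longrightarrow> v ` \<Delta> \<inter> designated \<noteq> {})"

end

theory Submission
  imports Defs
begin

definition GG :: "'v fm set \<Rightarrow> 'v set \<Rightarrow> 'v set" where
  "GG \<Gamma> X = varset {\<gamma>\<in>\<Gamma>. vars \<gamma> \<subseteq> X}"

lemma GG_sub: "GG \<Gamma> X \<subseteq> X"
  unfolding GG_def varset_def by auto

lemma GG_mono: "X \<subseteq> Y \<Longrightarrow> GG \<Gamma> X \<subseteq> GG \<Gamma> Y"
  unfolding GG_def varset_def by auto

lemma GG_mem: "\<gamma> \<in> \<Gamma> \<Longrightarrow> vars \<gamma> \<subseteq> X \<Longrightarrow> vars \<gamma> \<subseteq> GG \<Gamma> X"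
  unfolding GG_def varset_def by auto

lemma vars_ne: "vars \<phi> \<noteq> {}"
  by (induction \<phi>) auto

inductive_set tower :: "('v set \<Rightarrow> 'v set) \<Rightarrow> 'v set set" for H where
  tw_Inter: "A \<in> Pow (tower H) \<Longrightarrow> \<Inter>A \<in> tower H"
| tw_H: "X \<in> tower H \<Longrightarrow> H X \<in> tower H"

definition extreme where
  "extreme H c \<longleftrightarrow> (\<forall>y\<in>tower H. c \<subset> y \<longrightarrow> c \<subseteq> H y)"

lemma lem1:
  assumes mono: "\<And>X Y. X \<subseteq> Y \<Longrightarrow> H X \<subseteq> H Y" and defl: "\<And>X. H X \<subseteq> X"
    and ex: "extreme H c" and x: "x \<in> tower H"
  shows "c \<subseteq> x \<or> x \<subseteq> H c"
  using x
proof induction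
  case (tw_Inter A)
  then show ?case by blast
next
  case (tw_H y)
  show ?case
  proof (cases "y \<subseteq> H c")
    case True
    then show ?thesis using defl[of y] by blast
  next
    case False
    with tw_H have "c \<subseteq> y" by blast
    show ?thesis
    proof (cases "c = y")
      case True then show ?thesis by blast
    next
      case False
      with \<open>c \<subseteq> y\<close> have "c \<subset> y" by blast
      with ex tw_H(1) show ?thesis unfolding extreme_def by blast
    qed
  qed
qed

lemma lem2:
  assumes mono: "\<And>X Y. X \<subseteq> Y \<Longrightarrow> H X \<subseteq> H Y" and defl: "\<And>X. H X \<subseteq> X"
    and c: "c \<in> tower H"
  shows "extreme H c"
  using c
proof induction
  case (tw_Inter A)
  show ?case unfolding extreme_def
  proof (intro ballI impI)
    fix y assume y: "y \<in> tower H" and lt: "\<Inter>A \<subset> y"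
    then obtain a where a: "a \<in> A" "\<not> y \<subseteq> a" by blast
    have aT: "a \<in> tower H" and exa: "extreme H a" using tw_Inter a by auto
    have "a \<subseteq> y \<or> y \<subseteq> H a" using lem1[OF mono defl exa y] by blast
    then have "a \<subseteq> y" using defl[of a] a by blast
    with a have "a \<subset> y" by blast
    with exa y have "a \<subseteq> H y" unfolding extreme_def by blast
    with a show "\<Inter>A \<subseteq> H y" by blast
  qed
next
  case (tw_H d)
  show ?case unfolding extreme_def
  proof (intro ballI impI)
    fix y assume y: "y \<in> tower H" and lt: "H d \<subset> y"
    have "d \<subseteq> y \<or> y \<subseteq> H d" using lem1[OF mono defl tw_H(2) y] by blast
    with lt have "d \<subseteq> y" by blast
    then show "H d \<subseteq> H y" by (rule mono)
  qed
qed

lemma chain: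
  assumes mono: "\<And>X Y. X \<subseteq> Y \<Longrightarrow> H X \<subseteq> H Y" and defl: "\<And>X. H X \<subseteq> X"
    and "c \<in> tower H" "x \<in> tower H"
  shows "c \<subseteq> x \<or> x \<subseteq> H c"
  using lem1[OF mono defl lem2[OF mono defl assms(3)] assms(4)] .

theorem proposition2:
  fixes \<Gamma> \<Delta> :: "'v fm set"
  assumes "cons_dia \<Gamma> \<Delta>"
  shows "\<exists>\<Gamma>' \<Delta>'. \<Gamma>' \<subseteq> \<Gamma> \<and> \<Delta>' \<subseteq> \<Delta> \<and> \<Gamma>' \<noteq> {} \<and> \<Delta>' \<noteq> {}
                 \<and> varset \<Gamma>' = varset \<Delta>'"
proof (rule ccontr)
  assume nsol: "\<not> ?thesis"
  define H where "H = (\<lambda>X. GG \<Gamma> (GG \<Delta> X))"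
  have mono: "\<And>X Y. X \<subseteq> Y \<Longrightarrow> H X \<subseteq> H Y" unfolding H_def by (intro GG_mono)
  have defl: "\<And>X. H X \<subseteq> X" unfolding H_def using GG_sub by (meson order_trans)
  have HD: "\<And>X. H X \<subseteq> GG \<Delta> X" unfolding H_def by (rule GG_sub)
  have nofix: "X = {}" if "X \<subseteq> H X" for X
  proof (rule ccontr)
    assume ne: "X \<noteq> {}"
    have h1: "GG \<Gamma> (GG \<Delta> X) \<subseteq> GG \<Gamma> X" by (rule GG_mono[OF GG_sub])
    have g: "GG \<Gamma> X = X"
      using that h1 GG_sub[of \<Gamma> X] unfolding H_def by (meson order_trans subset_antisym)
    have d: "GG \<Delta> X = X"
      using that GG_sub[of \<Gamma> "GG \<Delta> X"] GG_sub[of \<Delta> X] unfolding H_def by (meson order_trans subset_antisym)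
    let ?G = "{\<gamma>\<in>\<Gamma>. vars \<gamma> \<subseteq> X}" and ?D = "{\<gamma>\<in>\<Delta>. vars \<gamma> \<subseteq> X}"
    have G: "varset ?G = X" using g unfolding GG_def .
    have D: "varset ?D = X" using d unfolding GG_def .
    have "?G \<noteq> {}" using ne G unfolding varset_def by force
    moreover have "?D \<noteq> {}" using ne D unfolding varset_def by force
    moreover have "?G \<subseteq> \<Gamma>" "?D \<subseteq> \<Delta>" by auto
    moreover note G D
    ultimately have "\<exists>\<Gamma>' \<Delta>'. \<Gamma>' \<subseteq> \<Gamma> \<and> \<Delta>' \<subseteq> \<Delta> \<and> \<Gamma>' \<noteq> {} \<and> \<Delta>' \<noteq> {}
                 \<and> varset \<Gamma>' = varset \<Delta>'" by (intro exI[of _ ?G] exI[of _ ?D]) simp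
    with nsol show False by (rule notE)
  qed
  define XF where "XF = (\<lambda>\<phi>. \<Inter>{X\<in>tower H. vars \<phi> \<subseteq> X})"
  have XFT: "XF \<phi> \<in> tower H" for \<phi> unfolding XF_def by (rule tw_Inter) auto
  have XFsub: "vars \<phi> \<subseteq> XF \<phi>" for \<phi> unfolding XF_def by auto
  have XFmin: "X \<in> tower H \<Longrightarrow> vars \<phi> \<subseteq> X \<Longrightarrow> XF \<phi> \<subseteq> X" for \<phi> X unfolding XF_def by auto
  have notH: "\<not> vars \<phi> \<subseteq> H (XF \<phi>)" for \<phi>
  proof
    assume "vars \<phi> \<subseteq> H (XF \<phi>)"
    then have "XF \<phi> \<subseteq> H (XF \<phi>)" using XFmin tw_H[OF XFT] by blast
    then have "XF \<phi> = {}" by (rule nofix)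
    then show False using XFsub[of \<phi>] vars_ne[of \<phi>] by blast
  qed
  define v where "v = (\<lambda>\<phi>. \<not> vars \<phi> \<subseteq> GG \<Delta> (XF \<phi>))"
  have key: "XF b \<subseteq> XF a \<Longrightarrow> v (Dia a b) \<in> dia_B (v a) (v b)" for a b
  proof -
    assume ba: "XF b \<subseteq> XF a"
    have e: "XF (Dia a b) = XF a"
    proof
      show "XF (Dia a b) \<subseteq> XF a" using XFmin[OF XFT] XFsub[of a] XFsub[of b] ba by auto
      show "XF a \<subseteq> XF (Dia a b)" using XFmin[OF XFT, of a] XFsub[of "Dia a b"] by auto
    qed
    have "XF a \<subseteq> XF b \<or> XF b \<subseteq> H (XF a)" using chain[OF mono defl XFT XFT] by blast
    then show ?thesis
    proof
      assume "XF a \<subseteq> XF b"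
      with ba e have "XF (Dia a b) = XF a" "XF (Dia a b) = XF b" by auto
      then have "v (Dia a b) = (v a \<or> v b)" unfolding v_def by auto
      then show ?thesis unfolding dia_B_def by auto
    next
      assume "XF b \<subseteq> H (XF a)"
      then have "vars b \<subseteq> GG \<Delta> (XF a)" using XFsub[of b] HD by blast
      then have "v (Dia a b) = v a" unfolding v_def using e by auto
      then show ?thesis unfolding dia_B_def by auto
    qed
  qed
  have val: "is_valuation v" unfolding is_valuation_def
  proof (intro allI)
    fix a b
    have "XF b \<subseteq> XF a \<or> XF a \<subseteq> XF b"
      using chain[OF mono defl XFT[of a] XFT[of b]] defl[of "XF a"] by blast
    then show "v (Dia a b) \<in> dia_B (v a) (v b)"
    proof
      assume "XF a \<subseteq> XF b"
      then have "v (Dia b a) \<in> dia_B (v b) (v a)" by (rule key)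
      moreover have "v (Dia b a) = v (Dia a b)" unfolding v_def XF_def by (simp add: Un_commute)
      ultimately show ?thesis unfolding dia_B_def by auto
    qed (rule key)
  qed
  have "v ` \<Gamma> \<subseteq> designated"
  proof
    fix t assume "t \<in> v ` \<Gamma>"
    then obtain \<gamma> where g: "\<gamma> \<in> \<Gamma>" "t = v \<gamma>" by blast
    have "v \<gamma>"
    proof (rule ccontr)
      assume "\<not> v \<gamma>"
      then have "vars \<gamma> \<subseteq> GG \<Delta> (XF \<gamma>)" unfolding v_def by simp
      then have "vars \<gamma> \<subseteq> H (XF \<gamma>)" unfolding H_def using GG_mem[OF g(1)] by blast
      then show False using notH by blast
    qed
    then show "t \<in> designated" using g unfolding designated_def by simp
  qed
  moreover have "v ` \<Delta> \<inter> designated = {}"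
  proof -
    have "\<not> v \<delta>" if "\<delta> \<in> \<Delta>" for \<delta>
      using GG_mem[OF that XFsub[of \<delta>]] unfolding v_def by simp
    then show ?thesis unfolding designated_def by auto
  qed
  ultimately show False using assms val unfolding cons_dia_def by blast
qed

end
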